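(* Let $h\colon[0,1/2]\to[0,1]$ be the binary entropy function (in bits), $h^{-1}\colon[0,1]\to[0,1/2]$ its inverse, and $a\ast b=a(1-b)+(1-a)b$. For every $x\in[0,1]$, the function $g_x(t)=h\big(h^{-1}(t)\ast h^{-1}(2x-t)\big)$, defined for $t\in[\max\{0,2x-1\},x]$, is decreasing in $t$. *)

theory Defs
  imports Complex_Main
begin

definition bin_entropy :: "real \<Rightarrow> real" where
  "bin_entropy p = (if p = 0 \<or> p = 1 then 0
      else - p * log 2 p - (1 - p) * log 2 (1 - p))"

definition bin_entropy_inv :: "real \<Rightarrow> real" where
  "bin_entropy_inv t = (THE p. 0 \<le> p \<and> p \<le> 1/2 \<and> bin_entropy p = t)"

definition bconv :: "real \<Rightarrow> real \<Rightarrow> real" where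
  "bconv a b = a * (1 - b) + (1 - a) * b"

definition g_fun :: "real \<Rightarrow> real \<Rightarrow> real" where
  "g_fun x t = bin_entropy (bconv (bin_entropy_inv t) (bin_entropy_inv (2 * x - t)))"

end

theory Submission imports Defs "HOL-Real_Asymp.Real_Asymp" begin

definition E :: "real \<Rightarrow> real" where
  "E p = - (p * ln p) - (1 - p) * ln (1 - p)"

lemma bin_entropy_E: "bin_entropy p = E p / ln 2"
  by (auto simp: bin_entropy_def E_def log_def diff_divide_distrib)

lemma E_cont: "continuous_on {0..1} E"
proof (rule continuous_on_IccI)
  show "(E \<longlongrightarrow> E 0) (at_right 0)" unfolding E_def by real_asymp
  show "(E \<longlongrightarrow> E 1) (at_left 1)" unfolding E_def by real_asymp
  show "E \<midarrow>x\<rightarrow> E x" if "0 < x" "x < 1" for x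
  proof -
    have "isCont E x" unfolding E_def using that by (intro continuous_intros) auto
    then show ?thesis by (simp add: isCont_def)
  qed
qed simp

lemma E_deriv: "0 < p \<Longrightarrow> p < 1 \<Longrightarrow> DERIV E p :> ln (1 - p) - ln p"
  unfolding E_def
  by (rule derivative_eq_intros refl | simp)+

lemma E0: "E 0 = 0" by (simp add: E_def)
lemma Ehalf: "E (1/2) = ln 2" by (simp add: E_def ln_div)

lemma E_strict: assumes "0 \<le> p" "p < q" "q \<le> 1/2" shows "E p < E q"
proof (rule DERIV_pos_imp_increasing_open[OF assms(2)])
  fix y assume y: "p < y" "y < q"
  have "ln y < ln (1 - y)" using y assms by (subst ln_less_cancel_iff) auto
  then show "\<exists>d. DERIV E y :> d \<and> d > 0"
    using E_deriv[of y] y assms by (intro exI[of _ "ln (1 - y) - ln y"]) auto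
next
  show "continuous_on {p..q} E" by (rule continuous_on_subset[OF E_cont]) (use assms in auto)
qed

lemma h_strict: "0 \<le> p \<Longrightarrow> p < q \<Longrightarrow> q \<le> 1/2 \<Longrightarrow> bin_entropy p < bin_entropy q"
  using E_strict[of p q] by (simp add: bin_entropy_E divide_strict_right_mono)

lemma h_mono: "0 \<le> p \<Longrightarrow> p \<le> q \<Longrightarrow> q \<le> 1/2 \<Longrightarrow> bin_entropy p \<le> bin_entropy q"
  using h_strict[of p q] by (cases "p = q") auto

lemma inv_props:
  assumes "0 \<le> t" "t \<le> 1"
  shows "0 \<le> bin_entropy_inv t \<and> bin_entropy_inv t \<le> 1/2 \<and> bin_entropy (bin_entropy_inv t) = t"
proof -
  have c: "continuous_on {0..1/2} bin_entropy" unfolding bin_entropy_E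
    by (intro continuous_intros continuous_on_subset[OF E_cont]) auto
  have "bin_entropy 0 \<le> t" "t \<le> bin_entropy (1/2)" using assms
    by (auto simp: bin_entropy_E E0 Ehalf)
  from IVT'[OF this _ c] obtain p where p: "0 \<le> p" "p \<le> 1/2" "bin_entropy p = t" by auto
  have u: "q = p" if "0 \<le> q \<and> q \<le> 1/2 \<and> bin_entropy q = t" for q
    using h_strict[of p q] h_strict[of q p] that p by (cases p q rule: linorder_cases) auto
  have "\<exists>!p. 0 \<le> p \<and> p \<le> 1/2 \<and> bin_entropy p = t" using p u by blast
  from theI'[OF this] show ?thesis unfolding bin_entropy_inv_def .
qed

lemma inv_mono:
  assumes "0 \<le> s" "s \<le> t" "t \<le> 1"
  shows "bin_entropy_inv s \<le> bin_entropy_inv t"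
proof (rule ccontr)
  assume "\<not> ?thesis"
  then have "bin_entropy (bin_entropy_inv t) < bin_entropy (bin_entropy_inv s)"
    using inv_props[of s] inv_props[of t] assms by (intro h_strict) auto
  then show False using inv_props[of s] inv_props[of t] assms by auto
qed

definition G :: "real \<Rightarrow> real" where "G a = E ((1 - a) / 2)"
definition D :: "real \<Rightarrow> real" where "D p = ln (1 - p) - ln p"

lemma G_cont: "continuous_on {0..1} G"
  unfolding G_def
  by (rule continuous_on_compose2[OF E_cont]) (auto intro!: continuous_intros)

lemma G_strict: "0 \<le> a \<Longrightarrow> a < b \<Longrightarrow> b \<le> 1 \<Longrightarrow> G b < G a"
  unfolding G_def by (rule E_strict) auto

lemma G_deriv: "0 < a \<Longrightarrow> a < 1 \<Longrightarrow> DERIV G a :> D ((1 - a) / 2) * (- 1 / 2)"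
  unfolding G_def D_def
  by (rule DERIV_chain2[OF E_deriv]) (auto intro!: derivative_eq_intros)

lemma D_anti: "0 < p \<Longrightarrow> p \<le> q \<Longrightarrow> q < 1 \<Longrightarrow> D q \<le> D p"
  unfolding D_def by (simp add: diff_mono)

lemma D_nonneg: "0 < p \<Longrightarrow> p \<le> 1/2 \<Longrightarrow> 0 \<le> D p"
  unfolding D_def by simp

lemma key:
  assumes "0 \<le> b1" "b1 \<le> b2" "b2 \<le> a2" "a2 \<le> a1" "a1 \<le> 1"
    and eq: "G a1 + G b1 = G a2 + G b2"
  shows "a1 * b1 \<le> a2 * b2"
proof (rule ccontr)
  assume "\<not> ?thesis"
  then have lt: "a2 * b2 < a1 * b1" by simp
  define c where "c = a2 * b2"
  have b2: "b2 > 0"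
  proof (rule ccontr)
    assume "\<not> b2 > 0" then have "b1 = 0" using assms by auto
    moreover have "0 \<le> a2 * b2" using assms by simp
    ultimately show False using lt by simp
  qed
  have a2: "a2 > 0" using b2 assms by auto
  have c0: "c > 0" using a2 b2 by (simp add: c_def)
  have a12: "a2 < a1"
  proof (rule ccontr)
    assume "\<not> a2 < a1" then have "a1 = a2" using assms by auto
    then show False using lt a2 assms by simp
  qed
  define F where "F a = G a + G (c / a)" for a
  have Fa2: "F a2 = G a2 + G b2" using a2 by (simp add: F_def c_def)
  have "F a1 \<le> F a2"
  proof (rule DERIV_nonpos_imp_decreasing_open[of a2 a1 F])
    show "a2 \<le> a1" using a12 by simp
    have "continuous_on {a2..a1} (\<lambda>a. G (c / a))"
    proof (rule continuous_on_compose2[OF G_cont])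
      show "continuous_on {a2..a1} (\<lambda>a. c / a)" using a2 by (intro continuous_intros) auto
      show "(\<lambda>a. c / a) ` {a2..a1} \<subseteq> {0..1}"
      proof
        fix z assume "z \<in> (\<lambda>a. c / a) ` {a2..a1}"
        then obtain a where a: "a2 \<le> a" "a \<le> a1" "z = c / a" by auto
        have "c / a \<le> c / a2" using a a2 c0 by (intro divide_left_mono) auto
        also have "c / a2 = b2" using a2 by (simp add: c_def)
        finally have "c / a \<le> b2" .
        then have "z \<le> 1" using a assms by linarith
        moreover have "0 \<le> z" using a c0 a2 by simp
        ultimately show "z \<in> {0..1}" by simp
      qed
    qed
    then show "continuous_on {a2..a1} F" unfolding F_def
      by (intro continuous_intros continuous_on_subset[OF G_cont]) (use assms a2 in auto)
  next
    fix y assume y: "a2 < y" "y < a1"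
    have y0: "0 < y" "y < 1" using y a2 assms by auto
    have "c / y < c / a2" using y a2 c0 by (intro divide_strict_left_mono) auto
    also have "c / a2 = b2" using a2 by (simp add: c_def)
    finally have cy: "c / y < b2" .
    have cy0: "0 < c / y" using c0 y0 by simp
    have cy1: "c / y < y" using cy assms y by auto
    define pa where "pa = (1 - y) / 2"
    define pb where "pb = (1 - c / y) / 2"
    have dF: "DERIV F y :> D pa * (-1/2) + D pb * (-1/2) * (- c / y ^ 2)"
    proof -
      have d1: "DERIV (\<lambda>a. c / a) y :> - c / y ^ 2" using y0
        by (auto intro!: derivative_eq_intros simp: power2_eq_square field_simps)
      have d2: "DERIV (\<lambda>a. G (c / a)) y :> D pb * (-1/2) * (- c / y ^ 2)"
        unfolding pb_def using G_deriv[OF cy0 less_trans[OF cy1 y0(2)]] d1 by (rule DERIV_chain2)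
      have d3: "DERIV G y :> D pa * (-1/2)" unfolding pa_def using G_deriv y0 by blast
      show ?thesis unfolding F_def using DERIV_add[OF d3 d2] .
    qed
    have Dpb: "0 \<le> D pb"
    proof (rule D_nonneg)
      have "c / y < 1" using cy1 y0 by linarith
      then show "0 < pb" unfolding pb_def by (intro divide_pos_pos) auto
      show "pb \<le> 1/2" using cy0 unfolding pb_def by (intro divide_right_mono) auto
    qed
    have Dab: "D pb \<le> D pa"
    proof (rule D_anti)
      show "0 < pa" using y0 unfolding pa_def by (intro divide_pos_pos) auto
      show "pa \<le> pb" using cy1 unfolding pa_def pb_def by (intro divide_right_mono) auto
      have h: "1 - c / y < 2" using cy0 by linarith
      show "pb < 1" unfolding pb_def using h by simp
    qed
    have "(c / y) * D pb \<le> y * D pb" using cy1 Dpb by (intro mult_right_mono) auto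
    also have "\<dots> \<le> y * D pa" using Dab y0 by (intro mult_left_mono) auto
    finally have ineq: "(c / y) * D pb \<le> y * D pa" .
    have "D pb * (c / y ^ 2) \<le> D pa"
    proof -
      have "D pb * (c / y ^ 2) = ((c / y) * D pb) / y" by (simp add: power2_eq_square field_simps)
      also have "\<dots> \<le> (y * D pa) / y" using ineq y0 by (intro divide_right_mono) auto
      also have "\<dots> = D pa" using y0 by simp
      finally show ?thesis .
    qed
    then show "\<exists>d. DERIV F y :> d \<and> d \<le> 0"
      using dF by (intro exI[of _ "D pa * (-1/2) + D pb * (-1/2) * (- c / y ^ 2)"]) auto
  qed
  moreover have "G b1 < G (c / a1)"
  proof (rule G_strict)
    show "0 \<le> c / a1" using c0 a2 a12 by simp
    show "c / a1 < b1" using lt a2 a12 by (simp add: c_def pos_divide_less_eq mult.commute)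
    show "b1 \<le> 1" using assms by auto
  qed
  ultimately show False using eq Fa2 by (simp add: F_def)
qed

lemma G_E: "G (1 - 2 * p) = E p" by (simp add: G_def)

lemma bconv_alt: "bconv p q = (1 - (1 - 2 * p) * (1 - 2 * q)) / 2"
  by (simp add: bconv_def algebra_simps)

theorem mainTheorem4:
  fixes x :: real
  assumes "0 \<le> x" and "x \<le> 1"
  shows "antimono_on {max 0 (2 * x - 1) .. x} (g_fun x)"
proof (rule monotone_onI)
  fix s t assume st: "s \<in> {max 0 (2 * x - 1) .. x}" "t \<in> {max 0 (2 * x - 1) .. x}" "s \<le> t"
  define p1 where "p1 = bin_entropy_inv s"
  define q1 where "q1 = bin_entropy_inv (2 * x - s)"
  define p2 where "p2 = bin_entropy_inv t"
  define q2 where "q2 = bin_entropy_inv (2 * x - t)"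
  have P1: "0 \<le> p1 \<and> p1 \<le> 1/2 \<and> bin_entropy p1 = s" unfolding p1_def using st assms by (intro inv_props) auto
  have Q1: "0 \<le> q1 \<and> q1 \<le> 1/2 \<and> bin_entropy q1 = 2 * x - s" unfolding q1_def using st assms by (intro inv_props) auto
  have P2: "0 \<le> p2 \<and> p2 \<le> 1/2 \<and> bin_entropy p2 = t" unfolding p2_def using st assms by (intro inv_props) auto
  have Q2: "0 \<le> q2 \<and> q2 \<le> 1/2 \<and> bin_entropy q2 = 2 * x - t" unfolding q2_def using st assms by (intro inv_props) auto
  have o1: "p1 \<le> p2" unfolding p1_def p2_def using st assms by (intro inv_mono) auto
  have o2: "p2 \<le> q2" unfolding p2_def q2_def using st assms by (intro inv_mono) auto
  have o3: "q2 \<le> q1" unfolding q1_def q2_def using st assms by (intro inv_mono) auto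
  have "bin_entropy p1 + bin_entropy q1 = bin_entropy p2 + bin_entropy q2" using P1 Q1 P2 Q2 by simp
  then have "E p1 + E q1 = E p2 + E q2" by (simp add: bin_entropy_E add_divide_distrib[symmetric])
  then have eq: "G (1 - 2 * p1) + G (1 - 2 * q1) = G (1 - 2 * p2) + G (1 - 2 * q2)" by (simp add: G_E)
  have k: "(1 - 2 * p1) * (1 - 2 * q1) \<le> (1 - 2 * p2) * (1 - 2 * q2)"
    using key[OF _ _ _ _ _ eq] P1 Q1 P2 Q2 o1 o2 o3 by auto
  have b1: "bconv p2 q2 \<le> bconv p1 q1" using k by (simp add: bconv_alt divide_right_mono)
  have n: "0 \<le> (1 - 2 * p1) * (1 - 2 * q1)" using P1 Q1 by simp
  have "(1 - 2 * p2) * (1 - 2 * q2) \<le> 1" using P2 Q2 by (intro mult_le_one) auto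
  then have b0: "0 \<le> bconv p2 q2" by (simp add: bconv_alt)
  have b2: "bconv p1 q1 \<le> 1/2" using n by (simp add: bconv_alt)
  have "bin_entropy (bconv p2 q2) \<le> bin_entropy (bconv p1 q1)" using b0 b1 b2 by (rule h_mono)
  then show "g_fun x t \<le> g_fun x s" unfolding g_fun_def p1_def p2_def q1_def q2_def .
qed

end
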